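(* Let $n\ge 2$ be an integer and let $\mathbf{q}$ be an indeterminate. Let $H$ be the $\mathbb{Z}[\mathbf{q}]$-algebra with generators $T_1,T_2,\dots,T_{n-1}$ and relations $(T_i+1)(T_i-\mathbf{q})=0$ for $i\in[1,n-1]$, $T_iT_{i+1}T_i=T_{i+1}T_iT_{i+1}$ for $i\in[1,n-2]$, and $T_iT_j=T_jT_i$ for $i\ne j$ in $[1,n-1]$ (the Hecke algebra of type $A_{n-1}$). Set $$\tau=T_1T_2\cdots T_{n-1}+T_2T_3\cdots T_{n-1}+\dots+T_{n-2}T_{n-1}+T_{n-1}+1\in H.$$ Then the following equality holds in $H$: $$\tau\prod_{k\in[1,n],\,k\ne n-1}\bigl(\tau-1-\mathbf{q}-\mathbf{q}^2-\dots-\mathbf{q}^{k-1}\bigr)=0.$$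
   Context: For integers $a,b$, $[a,b]$ denotes the set of integers $c$ with $a\le c\le b$. The factors in the product commute since they are polynomials in $\tau$. *)

theory Defs
  imports Main
begin

definition hecke_tau :: "nat \<Rightarrow> (nat \<Rightarrow> 'a::ring_1) \<Rightarrow> 'a" where
  "hecke_tau n T = (\<Sum>j=1..n. prod_list (map T [j..<n]))"

end

theory Submission imports Defs begin

lemma X_zero: "hecke_tau 0 T = 0"
  by (simp add: hecke_tau_def)

lemma X_Suc: "hecke_tau (Suc m) T = hecke_tau m T * T m + 1"
proof -
  have "(\<Sum>j=1..m. prod_list (map T [j..<Suc m])) = (\<Sum>j=1..m. prod_list (map T [j..<m]) * T m)"
    by (rule sum.cong) auto
  then show ?thesis
    by (simp add: hecke_tau_def sum_distrib_right)
qed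

lemma X_one: "hecke_tau (Suc 0) T = 1"
  by (simp add: X_Suc X_zero)

lemma central_pow:
  assumes qc: "\<forall>x. q * x = x * (q::'a::ring_1)"
  shows "q ^ k * x = x * q ^ k"
proof (induction k)
  case 0 then show ?case by simp
next
  case (Suc k)
  have "q ^ Suc k * x = q * (q ^ k * x)" by (simp add: mult.assoc)
  also have "\<dots> = q * (x * q ^ k)" by (simp only: Suc.IH)
  also have "\<dots> = x * q * q ^ k" using qc by (simp only: mult.assoc[symmetric])
  also have "\<dots> = x * q ^ Suc k" by (simp add: mult.assoc)
  finally show ?case .
qed

lemma central_br:
  assumes qc: "\<forall>x. q * x = x * (q::'a::ring_1)"
  shows "(\<Sum>i<k. q ^ i) * x = x * (\<Sum>i<k. q ^ i)"
  unfolding sum_distrib_left sum_distrib_right using central_pow[OF qc] by simp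

lemma br_Suc:
  "(\<Sum>i<Suc k. (q::'a::ring_1) ^ i) = 1 + q * (\<Sum>i<k. q ^ i)"
  unfolding sum.lessThan_Suc_shift by (simp add: sum_distrib_left)

lemma prod_q:
  assumes qc: "\<forall>x. q * x = x * (q::'a::ring_1)"
  shows "prod_list (map (\<lambda>k. q * g k) L) = q ^ length L * prod_list (map g L)"
proof (induction L)
  case Nil then show ?case by simp
next
  case (Cons a L)
  have "prod_list (map (\<lambda>k. q * g k) (a # L)) = q * g a * (q ^ length L * prod_list (map g L))"
    using Cons.IH by simp
  also have "\<dots> = q * (g a * q ^ length L) * prod_list (map g L)" by (simp add: mult.assoc)
  also have "\<dots> = q * (q ^ length L * g a) * prod_list (map g L)" using central_pow[OF qc] by simp
  also have "\<dots> = q ^ length (a # L) * prod_list (map g (a # L))" by (simp add: mult.assoc)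
  finally show ?case .
qed

lemma filt: "1 \<le> p \<Longrightarrow> filter (\<lambda>k. k \<noteq> p) [1..<p+2] = [1..<p] @ [p+1]"
proof -
  assume "1 \<le> p"
  then have "[1..<p+2] = [1..<p] @ [p, p+1]"
    using upt_add_eq_append[of 1 p 2] by (simp add: numeral_2_eq_2)
  moreover have "filter (\<lambda>k. k \<noteq> p) [1..<p] = [1..<p]" by (rule filter_True) auto
  ultimately show ?thesis by simp
qed

lemma poly_lemma:
  assumes qc: "\<forall>x. q * x = x * (q::'a::ring_1)" and h: "\<forall>k. y * y ^ k = y * v ^ k"
  shows "y * y ^ k * (1 + q * y) ^ j = y * v ^ k * (1 + q * v) ^ j"
proof (induction j arbitrary: k)
  case 0
  then show ?case using h by simp
next
  case (Suc j)
  have e: "\<And>z P. y * z ^ k * ((1 + q * z) * P) = y * z ^ k * P + q * (y * z ^ Suc k * P)"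
  proof -
    fix z P
    have "y * z ^ k * ((1 + q * z) * P) = y * z ^ k * P + y * z ^ k * (q * z * P)"
      by (simp add: algebra_simps)
    also have "y * z ^ k * (q * z * P) = q * (y * z ^ k * z * P)"
      using qc by (metis mult.assoc)
    finally show "y * z ^ k * ((1 + q * z) * P) = y * z ^ k * P + q * (y * z ^ Suc k * P)"
      by (metis power_Suc2 mult.assoc)
  qed
  have "y * y ^ k * (1 + q * y) ^ Suc j = y * y ^ k * ((1 + q * y) * (1 + q * y) ^ j)"
    by (simp only: power_Suc)
  also have "\<dots> = y * y ^ k * (1 + q * y) ^ j + q * (y * y ^ Suc k * (1 + q * y) ^ j)"
    by (rule e)
  also have "\<dots> = y * v ^ k * (1 + q * v) ^ j + q * (y * v ^ Suc k * (1 + q * v) ^ j)"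
    by (simp only: Suc.IH)
  also have "\<dots> = y * v ^ k * ((1 + q * v) * (1 + q * v) ^ j)"
    by (rule e[symmetric])
  also have "\<dots> = y * v ^ k * (1 + q * v) ^ Suc j"
    by (simp only: power_Suc)
  finally show ?case .
qed

lemma list_lemma:
  assumes h: "\<forall>k. x * x ^ k = x * w ^ k" and c: "\<forall>i. \<forall>z. c i * z = z * (c i :: 'a::ring_1)"
  shows "x * x ^ k * prod_list (map (\<lambda>i. x - c i) L) = x * w ^ k * prod_list (map (\<lambda>i. w - c i) L)"
proof (induction L arbitrary: k)
  case Nil
  then show ?case using h by simp
next
  case (Cons a L)
  have e: "\<And>z P. x * z ^ k * ((z - c a) * P) = x * z ^ Suc k * P - c a * (x * z ^ k * P)"
  proof -
    fix z P
    have "x * z ^ k * ((z - c a) * P) = x * z ^ k * z * P - x * z ^ k * (c a * P)"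
      by (simp add: algebra_simps)
    also have "x * z ^ k * (c a * P) = c a * (x * z ^ k * P)"
      using c by (metis mult.assoc)
    finally show "x * z ^ k * ((z - c a) * P) = x * z ^ Suc k * P - c a * (x * z ^ k * P)"
      by (metis power_Suc2 mult.assoc)
  qed
  have "x * x ^ k * prod_list (map (\<lambda>i. x - c i) (a # L)) = x * x ^ k * ((x - c a) * prod_list (map (\<lambda>i. x - c i) L))"
    by simp
  also have "\<dots> = x * x ^ Suc k * prod_list (map (\<lambda>i. x - c i) L) - c a * (x * x ^ k * prod_list (map (\<lambda>i. x - c i) L))"
    by (rule e)
  also have "\<dots> = x * w ^ Suc k * prod_list (map (\<lambda>i. w - c i) L) - c a * (x * w ^ k * prod_list (map (\<lambda>i. w - c i) L))"
    by (simp only: Cons.IH)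
  also have "\<dots> = x * w ^ k * ((w - c a) * prod_list (map (\<lambda>i. w - c i) L))"
    by (rule e[symmetric])
  also have "\<dots> = x * w ^ k * prod_list (map (\<lambda>i. w - c i) (a # L))"
    by simp
  finally show ?case .
qed


locale hk =
  fixes n :: nat and q :: "'a::ring_1" and T :: "nat \<Rightarrow> 'a"
  assumes qc: "\<forall>x. q * x = x * q"
    and quad: "\<forall>i\<in>{1..n-1}. (T i + 1) * (T i - q) = 0"
    and braid: "\<forall>i\<in>{1..n-2}. T i * T (i+1) * T i = T (i+1) * T i * T (i+1)"
    and comm: "\<forall>i\<in>{1..n-1}. \<forall>j\<in>{1..n-1}. (i + 1 < j \<or> j + 1 < i) \<longrightarrow> T i * T j = T j * T i"
begin

abbreviation X :: "nat \<Rightarrow> 'a" where "X m \<equiv> hecke_tau m T"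

lemma Tsq: "1 \<le> i \<Longrightarrow> i \<le> n-1 \<Longrightarrow> T i * (T i - q) = -(T i - q)"
proof -
  assume "1 \<le> i" "i \<le> n-1"
  then have "(T i + 1) * (T i - q) = 0" using quad by auto
  moreover have "(T i + 1) * (T i - q) = T i * (T i - q) + (T i - q)" by (simp add: distrib_right)
  ultimately show ?thesis by (metis eq_neg_iff_add_eq_0)
qed

lemma X_comm: "m < i \<Longrightarrow> i \<le> n-1 \<Longrightarrow> X m * T i = T i * X m"
proof (induction m)
  case 0 then show ?case by (simp add: X_zero)
next
  case (Suc m)
  have IH: "X m * T i = T i * X m" using Suc by simp
  show ?case
  proof (cases "m = 0")
    case True then show ?thesis by (simp add: X_Suc X_zero)
  next
    case False
    have c: "T m * T i = T i * T m" using comm False Suc.prems by auto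
    have "X (Suc m) * T i = X m * (T m * T i) + T i" by (simp add: X_Suc algebra_simps)
    also have "\<dots> = (X m * T i) * T m + T i" by (simp add: c mult.assoc)
    also have "\<dots> = T i * X (Suc m)" by (simp add: IH X_Suc algebra_simps)
    finally show ?thesis .
  qed
qed

lemma comm_gen: "a * b = b * a \<Longrightarrow> (1 + q * a) ^ j * b = b * (1 + q * a) ^ j"
proof -
  assume h: "a * b = b * a"
  have "q * b = b * q" using qc by simp
  then have "(1 + q * a) * b = b * (1 + q * a)"
    using h by (simp add: algebra_simps) (metis mult.assoc)
  then show ?thesis by (rule power_commuting_commutes)
qed

lemma B: "1 \<le> m \<Longrightarrow> m \<le> n-1 \<Longrightarrow> X (Suc m) * X m * (T m - q) = 0"
proof (induction m)
  case 0 then show ?case by simp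
next
  case (Suc m)
  show ?case
  proof (cases "m = 0")
    case True
    then show ?thesis using quad Suc.prems by (simp add: X_Suc X_zero)
  next
    case False
    define a where "a = X m"
    define R where "R = T m"
    define S where "S = T (Suc m)"
    define D where "D = S - q"
    have IH: "(a * R + 1) * a * (R - q) = 0"
      using Suc False by (simp add: a_def R_def X_Suc)
    have aS: "S * a = a * S" unfolding a_def S_def using X_comm[of m "Suc m"] Suc.prems by simp
    have SD: "S * D = - D" unfolding S_def D_def using Tsq[of "Suc m"] Suc.prems by simp
    have br: "S * R * S = R * S * R"
      using braid Suc.prems False unfolding S_def R_def by auto
    have Sq: "S * R * q = q * S * R" using qc by (metis mult.assoc)
    have SRD: "S * R * D = (R - q) * S * R"
      unfolding D_def by (simp add: right_diff_distrib left_diff_distrib br Sq)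
    have "X (Suc (Suc m)) * X (Suc m) * (T (Suc m) - q) = ((a * R + 1) * S + 1) * (a * R + 1) * D"
      by (simp add: X_Suc a_def R_def S_def D_def)
    also have "\<dots> = a * R * (S * a) * R * D + a * R * (S * D) + (S * a) * R * D + (S * D + D) + a * R * D"
      by (simp add: algebra_simps)
    also have "\<dots> = a * R * a * (S * R * D) + a * (S * R * D)"
      by (simp add: aS SD algebra_simps)
    also have "\<dots> = a * R * a * ((R - q) * S * R) + a * ((R - q) * S * R)"
      by (simp only: SRD)
    also have "\<dots> = ((a * R + 1) * a * (R - q)) * (S * R)"
      by (simp add: algebra_simps)
    also have "\<dots> = 0" by (simp add: IH)
    finally show ?thesis .
  qed
qed

lemma P: "m \<le> n-1 \<Longrightarrow> X (Suc m) * X (Suc m) ^ k = X (Suc m) * (1 + q * X m) ^ k"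
proof (induction m arbitrary: k)
  case 0 then show ?case by (simp add: X_one X_zero)
next
  case (Suc m)
  define x where "x = X (Suc (Suc m))"
  define y where "y = X (Suc m)"
  define v where "v = X m"
  define S where "S = T (Suc m)"
  define D where "D = S - q"
  define w where "w = 1 + q * y"
  have IH: "\<forall>k. y * y ^ k = y * (1 + q * v) ^ k" using Suc by (simp add: y_def v_def)
  define u where "u = 1 + q * v"
  have IH': "\<forall>k. y * y ^ k = y * u ^ k" using IH by (simp add: u_def)
  have yw: "y * w ^ j = y * (1 + q * u) ^ j" for j
    using poly_lemma[OF qc IH', of 0 j] by (simp add: w_def)
  have Bm: "x * y * D = 0" using B[of "Suc m"] Suc.prems by (simp add: x_def y_def D_def S_def)
  have wy: "w * y = y * w"
  proof -
    have "q * y = y * q" using qc by simp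
    then show ?thesis unfolding w_def by (simp add: algebra_simps)
  qed
  have vS: "v * S = S * v" unfolding v_def S_def using X_comm[of m "Suc m"] Suc.prems by simp
  have uS: "u * S = S * u" using comm_gen[OF vS, of 1] by (simp add: u_def)
  have vD: "(1 + q * u) ^ j * D = D * (1 + q * u) ^ j" for j
  proof -
    have "(1 + q * u) ^ j * S = S * (1 + q * u) ^ j" using comm_gen uS by simp
    moreover have "(1 + q * u) ^ j * q = q * (1 + q * u) ^ j" using qc by simp
    ultimately show ?thesis unfolding D_def by (simp add: right_diff_distrib left_diff_distrib)
  qed
  have Q: "x * w ^ j * y * D = 0" for j
  proof -
    have "x * w ^ j * y * D = x * (w ^ j * y) * D" by (simp add: mult.assoc)
    also have "\<dots> = x * (y * w ^ j) * D" using power_commuting_commutes[OF wy] by simp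
    also have "\<dots> = x * y * ((1 + q * u) ^ j * D)" by (simp add: yw mult.assoc)
    also have "\<dots> = (x * y * D) * (1 + q * u) ^ j" by (simp add: vD mult.assoc)
    also have "\<dots> = 0" by (simp add: Bm)
    finally show ?thesis .
  qed
  have xw: "x = w + y * D"
  proof -
    have "y * q = q * y" using qc by simp
    then show ?thesis unfolding x_def w_def D_def y_def S_def
      by (simp add: X_Suc right_diff_distrib algebra_simps)
  qed
  have C: "x * w ^ j * x ^ k = x * w ^ (j + k)" for k j
  proof (induction k arbitrary: j)
    case 0 then show ?case by simp
  next
    case (Suc k)
    have "x * w ^ j * x ^ Suc k = (x * w ^ j * x) * x ^ k" by (simp add: mult.assoc)
    also have "x * w ^ j * x = x * w ^ Suc j"
    proof -
      have "x * w ^ j * x = x * w ^ j * w + x * w ^ j * y * D"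
      proof -
        have "x * w ^ j * x = x * w ^ j * (w + y * D)"
          by (rule arg_cong[where f="\<lambda>z. x * w ^ j * z"], rule xw)
        then show ?thesis by (simp add: distrib_left mult.assoc)
      qed
      then show ?thesis using Q by (simp add: mult.assoc power_commutes)
    qed
    also have "x * w ^ Suc j * x ^ k = x * w ^ (Suc j + k)" by (rule Suc.IH)
    finally show ?case by simp
  qed
  show ?case using C[of 0 k] by (simp add: x_def w_def y_def)
qed

lemma M: "2 \<le> m \<Longrightarrow> m \<le> n \<Longrightarrow>
  X m * prod_list (map (\<lambda>k. X m - (\<Sum>i<k. q ^ i)) (filter (\<lambda>k. k \<noteq> m - 1) [1..<m+1])) = 0"
proof (induction m)
  case 0 then show ?case by simp
next
  case (Suc m)
  show ?case
  proof (cases "m = 1")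
    case True
    have f: "filter (\<lambda>k. k \<noteq> 1) [1..<3] = [2]" by (simp add: upt_rec)
    have s2: "(\<Sum>i<2. q ^ i) = 1 + q" by (simp add: numeral_2_eq_2)
    have "(T 1 + 1) * (T 1 - q) = 0" using quad Suc.prems True by auto
    then show ?thesis using True f s2
      by (simp add: X_Suc X_zero numeral_2_eq_2 algebra_simps)
  next
    case False
    then have m2: "2 \<le> m" using Suc.prems by simp
    define c where "c = (\<lambda>k::nat. (\<Sum>i<k. q ^ i))"
    define x where "x = X (Suc m)"
    define Y where "Y = X m"
    define w where "w = 1 + q * Y"
    define f where "f = (\<lambda>k. Y - c k)"
    have IH: "Y * prod_list (map f (filter (\<lambda>k. k \<noteq> m - 1) [1..<m+1])) = 0"
      using Suc m2 by (simp add: Y_def f_def c_def)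
    have L1: "filter (\<lambda>k. k \<noteq> m - 1) [1..<m+1] = [1..<m-1] @ [m]"
      using filt[of "m-1"] m2 by (simp add: numeral_2_eq_2)
    have L2: "filter (\<lambda>k. k \<noteq> Suc m - 1) [1..<Suc m+1] = [1..<m] @ [m+1]"
      using filt[of m] m2 by (simp add: numeral_2_eq_2)
    define L where "L = [1..<m] @ [m+1]"
    have Pm: "\<forall>k. x * x ^ k = x * w ^ k" using P[of m] Suc.prems by (simp add: x_def w_def Y_def)
    have cc: "\<forall>i. \<forall>z. c i * z = z * c i" using central_br[OF qc] by (simp add: c_def)
    have step1: "x * prod_list (map (\<lambda>k. x - c k) L) = x * prod_list (map (\<lambda>k. w - c k) L)"
      using list_lemma[OF Pm cc, of 0 L] by simp
    have step2: "map (\<lambda>k. w - c k) L = map (\<lambda>k. q * f (k - 1)) L"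
    proof (rule map_cong[OF refl])
      fix k assume "k \<in> set L"
      then have "k = Suc (k - 1)" unfolding L_def by auto
      then have "c k = 1 + q * c (k - 1)" unfolding c_def by (metis br_Suc)
      then show "w - c k = q * f (k - 1)" by (simp add: w_def f_def right_diff_distrib)
    qed
    have step3: "prod_list (map (\<lambda>k. f (k - 1)) L) = Y * prod_list (map f ([1..<m-1] @ [m]))"
    proof -
      have "[1..<m] = map Suc [0..<m-1]" using m2 by (simp add: map_Suc_upt)
      moreover have "[0..<m-1] = 0 # [1..<m-1]" using m2 by (simp add: upt_conv_Cons)
      ultimately have "map (\<lambda>k. f (k - 1)) [1..<m] = f 0 # map f [1..<m-1]" by simp
      moreover have "f 0 = Y" by (simp add: f_def c_def)
      ultimately show ?thesis by (simp add: L_def f_def mult.assoc)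
    qed
    have "X (Suc m) * prod_list (map (\<lambda>k. X (Suc m) - (\<Sum>i<k. q ^ i)) (filter (\<lambda>k. k \<noteq> Suc m - 1) [1..<Suc m+1]))
        = x * prod_list (map (\<lambda>k. x - c k) L)" by (simp only: L2 L_def x_def c_def)
    also have "\<dots> = x * (q ^ length L * prod_list (map (\<lambda>k. f (k - 1)) L))"
      by (simp only: step1 step2 prod_q[OF qc])
    also have "\<dots> = x * q ^ length L * (Y * prod_list (map f ([1..<m-1] @ [m])))"
      by (simp only: step3 mult.assoc)
    also have "\<dots> = 0" using IH L1 by simp
    finally show ?thesis .
  qed
qed

end

theorem proposition2:
  fixes n :: nat and q :: "'a::ring_1" and T :: "nat \<Rightarrow> 'a"
  assumes "n \<ge> 2"
    and q_central: "\<forall>x. q * x = x * q"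
    and quad: "\<forall>i\<in>{1..n-1}. (T i + 1) * (T i - q) = 0"
    and braid: "\<forall>i\<in>{1..n-2}. T i * T (i+1) * T i = T (i+1) * T i * T (i+1)"
    and comm: "\<forall>i\<in>{1..n-1}. \<forall>j\<in>{1..n-1}. (i + 1 < j \<or> j + 1 < i) \<longrightarrow> T i * T j = T j * T i"
  shows "hecke_tau n T *
           prod_list (map (\<lambda>k. hecke_tau n T - (\<Sum>i<k. q ^ i))
                          (filter (\<lambda>k. k \<noteq> n - 1) [1..<n+1])) = 0"
proof -
  interpret hk n q T using q_central quad braid comm by unfold_locales
  show ?thesis using M[of n] assms(1) by simp
qed

end
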